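(* Consider the following single-beam millimeter-wave downlink model. Fix an integer $M\ge 1$, parameters $\alpha>0$, $\phi>0$, $\lambda>0$, $R_{\mathcal{D}}>0$, $\Delta>0$ and a beam direction $\bar{\theta}\in\mathbb{R}$. For $\theta\in\mathbb{R}$ let $\mathbf{a}(\theta)=\frac{1}{\sqrt{M}}\big(1,e^{-\mathrm{j}\pi\theta},\dots,e^{-\mathrm{j}\pi(M-1)\theta}\big)^T$ and let the beamformer be $\mathbf{p}=\mathbf{a}(\bar{\theta})$. Let $\mathcal{D}_{\theta}=\{(r,\theta): 0\le r\le R_{\mathcal{D}},\ \bar{\theta}-\Delta\le\theta\le\bar{\theta}+\Delta\}$ (polar coordinates, the angular coordinate of a user being identified with the normalized direction of its channel). Suppose that, conditioned on there being exactly $K\ge 1$ users in $\mathcal{D}_{\theta}$, the users' polar positions $(r_k,\theta_k)$, $k=1,\dots,K$, are i.i.d. with density $\frac{\phi^{2}e^{-\phi r}}{2\Delta\,\gamma(2,R_{\mathcal{D}}\phi)}\,r$ with respect to $dr\,d\theta$ on $[0,R_{\mathcal{D}}]\times[\bar{\theta}-\Delta,\bar{\theta}+\Delta]$ (this is the conditional law of a Poisson point process on $\mathcal{D}_\theta$ with intensity $\lambda e^{-\phi r}$), and that user $k$ has channel vector $\mathbf{h}_k=\sqrt{M}\,\frac{a_k\mathbf{a}(\theta_k)}{\sqrt{1+r_k^{\alpha}}}$, where $a_1,\dots,a_K$ are i.i.d. $\mathcal{CN}(0,1)$, independent of the positions. Order the effective channel gains so that $|\mathbf{h}_{1}^H\mathbf{p}|^2\le\cdots\le|\mathbf{h}_{K}^H\mathbf{p}|^2$.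 Then for each $1\le j\le K$, the probability density function of the $j$-th smallest gain $|\mathbf{h}_{j}^H\mathbf{p}|^2$ is $$f_{|\mathbf{h}_{j}^H\mathbf{p}|^2}(z)=c_j\,\frac{dF_{\pi(j)}(z)}{dz}\,F_{\pi(j)}^{j-1}(z)\,\big(1-F_{\pi(j)}(z)\big)^{K-j},\qquad c_j=\frac{K!}{(j-1)!(K-j)!},$$ where $$F_{\pi(j)}(y)=\int_{\bar{\theta}-\Delta}^{\bar{\theta}+\Delta}\int_0^{R_{\mathcal{D}}}\left(1-e^{-\frac{y(1+r^{\alpha})}{F_M(\pi[\bar{\theta}-\theta])}}\right)\frac{\lambda\phi^{2}e^{-\phi r}}{2\Delta\lambda\,\gamma(2,R_{\mathcal{D}}\phi)}\,r\,dr\,d\theta .$$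
   Context: $F_M(x)=\frac{\sin^2(Mx/2)}{M\sin^2(x/2)}$ denotes the Fejér kernel (with $F_M(0)=M$), so that $|\mathbf{h}_k^H\mathbf{p}|^2=\frac{|a_k|^2}{1+r_k^\alpha}F_M(\pi[\bar\theta-\theta_k])$. $\gamma(s,x)=\int_0^x t^{s-1}e^{-t}\,dt$ is the lower incomplete gamma function. $\mathrm{j}=\sqrt{-1}$. *)

theory Defs
  imports "HOL-Probability.Probability"
begin

definition lower_gamma :: "real \<Rightarrow> real \<Rightarrow> real" where
  "lower_gamma s x = (LBINT t=0..x. t powr (s - 1) * exp (- t))"

text \<open>Fejer kernel F_M(x) = sin^2(Mx/2)/(M sin^2(x/2)), continuously extended
  (value M) where sin(x/2) = 0.\<close>
definition fejer :: "nat \<Rightarrow> real \<Rightarrow> real" where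
  "fejer M x = (if sin (x / 2) = 0 then real M
                else (sin (real M * x / 2))\<^sup>2 / (real M * (sin (x / 2))\<^sup>2))"

definition steer :: "nat \<Rightarrow> real \<Rightarrow> nat \<Rightarrow> complex" where
  "steer M \<theta> m = exp (- \<i> * complex_of_real (pi * real m * \<theta>)) / complex_of_real (sqrt (real M))"

definition chan :: "nat \<Rightarrow> real \<Rightarrow> real \<Rightarrow> real \<Rightarrow> complex \<Rightarrow> nat \<Rightarrow> complex" where
  "chan M \<alpha> r \<theta> a m = complex_of_real (sqrt (real M)) * a * steer M \<theta> m
                            / complex_of_real (sqrt (1 + r powr \<alpha>))"

definition gain :: "nat \<Rightarrow> real \<Rightarrow> real \<Rightarrow> real \<Rightarrow> real \<Rightarrow> complex \<Rightarrow> real" where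
  "gain M \<alpha> \<theta>bar r \<theta> a = (cmod (\<Sum>m<M. cnj (chan M \<alpha> r \<theta> a m) * steer M \<theta>bar m))\<^sup>2"

text \<open>j-th smallest (1-based) among g 0, ..., g (K-1).\<close>
definition order_stat :: "nat \<Rightarrow> (nat \<Rightarrow> real) \<Rightarrow> nat \<Rightarrow> real" where
  "order_stat K g j = sort (map g [0..<K]) ! (j - 1)"

definition pos_density :: "real \<Rightarrow> real \<Rightarrow> real \<Rightarrow> real \<Rightarrow> real \<Rightarrow> real \<Rightarrow> real" where
  "pos_density \<phi> R \<Delta> \<theta>bar r \<theta> =
     indicator ({0..R} \<times> {\<theta>bar - \<Delta>..\<theta>bar + \<Delta>}) (r, \<theta>) *
     (\<phi>\<^sup>2 * exp (- \<phi> * r) / (2 * \<Delta> * lower_gamma 2 (R * \<phi>)) * r)"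

definition cn_density :: "complex \<Rightarrow> real" where
  "cn_density z = exp (- (cmod z)\<^sup>2) / pi"

definition Fpi :: "nat \<Rightarrow> real \<Rightarrow> real \<Rightarrow> real \<Rightarrow> real \<Rightarrow> real \<Rightarrow> real \<Rightarrow> real \<Rightarrow> real" where
  "Fpi M \<alpha> \<phi> lam R \<Delta> \<theta>bar y =
     (LBINT \<theta>=\<theta>bar - \<Delta>..\<theta>bar + \<Delta>. (LBINT r=0..R.
        (1 - exp (- (y * (1 + r powr \<alpha>) / fejer M (pi * (\<theta>bar - \<theta>)))))
        * (lam * \<phi>\<^sup>2 * exp (- \<phi> * r) / (2 * \<Delta> * lam * lower_gamma 2 (R * \<phi>))) * r))"

end

theory Submission
  imports Defs
begin

lemma cmod_cis_minus_one_sq: "(cmod (cis t - 1))\<^sup>2 = 4 * (sin (t/2))\<^sup>2"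
proof -
  have "(cmod (cis t - 1))\<^sup>2 = (cos t - 1)\<^sup>2 + (sin t)\<^sup>2"
    by (simp add: cmod_power2)
  also have "\<dots> = 2 - 2 * cos t"
    using sin_cos_squared_add[of t] by (simp add: power2_eq_square algebra_simps)
  also have "cos t = 1 - 2 * (sin (t/2))\<^sup>2"
    using cos_double_sin[of "t/2"] by simp
  finally show ?thesis by simp
qed

lemma geom_cis_sq:
  fixes x :: real
  shows "(cmod (\<Sum>m<M. cis (real m * x)))\<^sup>2 =
    (if sin (x/2) = 0 then (real M)\<^sup>2 else (sin (real M * x / 2))\<^sup>2 / (sin (x/2))\<^sup>2)"
proof (cases "sin (x/2) = 0")
  case True
  then obtain i :: int where i: "x/2 = i * pi" using sin_zero_iff_int2 by blast
  have "cis (real m * x) = 1" for m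
  proof -
    have e: "real m * x = 2 * pi * real_of_int (int m * i)" using i by (simp add: algebra_simps)
    show ?thesis unfolding e by (simp only: cis.ctr cos_int_2pin sin_int_2pin) (simp add: complex_eq_iff)
  qed
  then show ?thesis using True by simp
next
  case False
  have ne: "cis x \<noteq> 1"
  proof
    assume "cis x = 1"
    then have "(cmod (cis x - 1))\<^sup>2 = 0" by simp
    then show False using False cmod_cis_minus_one_sq[of x] by simp
  qed
  have "(\<Sum>m<M. cis (real m * x)) = (\<Sum>m<M. (cis x) ^ m)"
    by (intro sum.cong refl) (simp add: Complex.DeMoivre)
  also have "\<dots> = ((cis x) ^ M - 1) / (cis x - 1)"
    using ne by (simp add: geometric_sum)
  also have "(cis x) ^ M = cis (real M * x)" by (simp add: Complex.DeMoivre)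
  finally have "(cmod (\<Sum>m<M. cis (real m * x)))\<^sup>2
      = (cmod (cis (real M * x) - 1))\<^sup>2 / (cmod (cis x - 1))\<^sup>2"
    by (simp add: norm_divide power_divide)
  also have "\<dots> = (sin (real M * x / 2))\<^sup>2 / (sin (x/2))\<^sup>2"
    by (simp add: cmod_cis_minus_one_sq)
  finally show ?thesis using False by simp
qed

lemma fejer_even: "fejer M (- x) = fejer M x"
  by (simp add: fejer_def)

lemma fejer_nonneg: "0 \<le> fejer M x"
  by (simp add: fejer_def)

lemma gain_eq:
  assumes "M \<ge> 1"
  shows "gain M \<alpha> tb r t a = (cmod a)\<^sup>2 / (1 + r powr \<alpha>) * fejer M (pi * (tb - t))"
proof -
  define s where "s = sqrt (1 + r powr \<alpha>)"
  have s0: "s > 0" unfolding s_def by (simp add: add_pos_nonneg)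
  have ss: "s\<^sup>2 = 1 + r powr \<alpha>" unfolding s_def by (simp add: add_nonneg_nonneg)
  define x where "x = pi * (t - tb)"
  have sM: "sqrt (real M) > 0" using assms by simp
  have trm: "cnj (chan M \<alpha> r t a m) * steer M tb m
      = cnj a / (of_real s * of_real (sqrt (real M))) * cis (real m * x)" for m
  proof -
    have st: "steer M th m = cis (- (pi * real m * th)) / of_real (sqrt (real M))" for th
      unfolding steer_def cis_conv_exp by (simp add: algebra_simps)
    have cc: "cnj (cis u) = cis (- u)" for u by (simp add: complex_eq_iff)
    have "cnj (chan M \<alpha> r t a m) * steer M tb m
       = cnj a / (of_real s * of_real (sqrt (real M))) * (cis (pi * real m * t) * cis (- (pi * real m * tb)))"
      using sM s0 unfolding chan_def st s_def[symmetric]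
      by (simp add: cc field_simps)
    also have "cis (pi * real m * t) * cis (- (pi * real m * tb)) = cis (real m * x)"
      by (simp add: cis_mult x_def algebra_simps)
    finally show ?thesis .
  qed
  have "(\<Sum>m<M. cnj (chan M \<alpha> r t a m) * steer M tb m)
      = cnj a / (of_real s * of_real (sqrt (real M))) * (\<Sum>m<M. cis (real m * x))"
    by (simp add: trm sum_distrib_left)
  then have "gain M \<alpha> tb r t a = (cmod a)\<^sup>2 / (s\<^sup>2 * real M) * (cmod (\<Sum>m<M. cis (real m * x)))\<^sup>2"
    unfolding gain_def using s0 sM
    by (simp add: norm_mult norm_divide power_mult_distrib power_divide abs_of_pos)
  also have "\<dots> = (cmod a)\<^sup>2 / (1 + r powr \<alpha>) * fejer M x"
    using ss s0 assms
    unfolding geom_cis_sq fejer_def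
    by (simp add: ss power2_eq_square)
  also have "fejer M x = fejer M (pi * (tb - t))"
    unfolding x_def by (metis fejer_even minus_diff_eq mult_minus_right)
  finally show ?thesis .
qed

lemma order_stat_le_iff:
  assumes "1 \<le> j" "j \<le> K"
  shows "order_stat K g j \<le> a \<longleftrightarrow> j \<le> card {k\<in>{..<K}. g k \<le> a}"
proof -
  define xs where "xs = map g [0..<K]"
  define s where "s = sort xs"
  have ls: "length s = K" by (simp add: s_def xs_def)
  have srt: "sorted s" by (simp add: s_def)
  have c1: "card {k\<in>{..<K}. g k \<le> a} = length (filter (\<lambda>x. x \<le> a) xs)"
    unfolding length_filter_conv_card by (auto simp: xs_def intro!: arg_cong[where f=card])
  have "length (filter (\<lambda>x. x \<le> a) xs) = length (filter (\<lambda>x. x \<le> a) s)"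
    by (metis mset_filter mset_sort s_def size_mset)
  also have "\<dots> = card {i. i < K \<and> s ! i \<le> a}"
    by (simp add: length_filter_conv_card ls)
  finally have c2: "card {k\<in>{..<K}. g k \<le> a} = card {i. i < K \<and> s ! i \<le> a}"
    using c1 by simp
  have os: "order_stat K g j = s ! (j - 1)" by (simp add: order_stat_def s_def xs_def)
  show ?thesis
  proof
    assume h: "order_stat K g j \<le> a"
    have "{..<j} \<subseteq> {i. i < K \<and> s ! i \<le> a}"
    proof
      fix i assume "i \<in> {..<j}"
      then have "i \<le> j - 1" "j - 1 < K" using assms by auto
      then have "s ! i \<le> s ! (j - 1)" using srt ls by (simp add: sorted_nth_mono)
      then show "i \<in> {i. i < K \<and> s ! i \<le> a}" using h os \<open>i \<le> j - 1\<close> \<open>j - 1 < K\<close> by auto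
    qed
    then have "card {..<j} \<le> card {i. i < K \<and> s ! i \<le> a}"
      by (intro card_mono) auto
    then show "j \<le> card {k\<in>{..<K}. g k \<le> a}" using c2 by simp
  next
    assume h: "j \<le> card {k\<in>{..<K}. g k \<le> a}"
    show "order_stat K g j \<le> a"
    proof (rule ccontr)
      assume "\<not> order_stat K g j \<le> a"
      then have gt: "s ! (j - 1) > a" using os by simp
      have "{i. i < K \<and> s ! i \<le> a} \<subseteq> {..<j - 1}"
      proof
        fix i assume i: "i \<in> {i. i < K \<and> s ! i \<le> a}"
        show "i \<in> {..<j - 1}"
        proof (rule ccontr)
          assume "i \<notin> {..<j - 1}"
          then have "j - 1 \<le> i" by simp
          then have "s ! (j - 1) \<le> s ! i" using srt ls i by (simp add: sorted_nth_mono)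
          then show False using gt i by simp
        qed
      qed
      then have "card {i. i < K \<and> s ! i \<le> a} \<le> j - 1"
        using card_mono[of "{..<j - 1}"] by fastforce
      then show False using h c2 assms by simp
    qed
  qed
qed

definition Bsum :: "nat \<Rightarrow> nat \<Rightarrow> real \<Rightarrow> real" where
  "Bsum K j p = (\<Sum>i\<in>{j..K}. real (K choose i) * p ^ i * (1 - p) ^ (K - i))"

lemma telescope_aux:
  fixes f :: "nat \<Rightarrow> real"
  shows "m \<le> n \<Longrightarrow> (\<Sum>i\<in>{Suc m..n}. f (i - 1) - f i) = f m - f n"
proof (induction n)
  case 0 then show ?case by simp
next
  case (Suc n)
  show ?case
  proof (cases "m \<le> n")
    case True
    then have "{Suc m..Suc n} = insert (Suc n) {Suc m..n}" by auto
    then show ?thesis using Suc True by simp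
  next
    case False
    then have "m = Suc n" using Suc by simp
    then show ?thesis by simp
  qed
qed

lemma Bsum_deriv:
  assumes "1 \<le> j" "j \<le> K"
  shows "(Bsum K j has_real_derivative
           fact K / (fact (j - 1) * fact (K - j)) * p ^ (j - 1) * (1 - p) ^ (K - j)) (at p)"
proof -
  define T where "T i = real K * real ((K - 1) choose i) * p ^ i * (1 - p) ^ (K - 1 - i)" for i
  define b' where "b' i = real (K choose i) * (real i * p ^ (i - 1) * (1 - p) ^ (K - i)
                        - real (K - i) * p ^ i * (1 - p) ^ (K - i - 1))" for i
  have d0: "((\<lambda>p::real. c * p ^ i * (1 - p) ^ n) has_real_derivative
     c * (real i * p ^ (i - 1) * (1 - p) ^ n - real n * p ^ i * (1 - p) ^ (n - 1))) (at p)" for c i n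
    apply (rule derivative_eq_intros refl)+
    apply (simp add: algebra_simps)
    done
  have d: "((\<lambda>p. real (K choose i) * p ^ i * (1 - p) ^ (K - i)) has_real_derivative b' i) (at p)" for i
    unfolding b'_def using d0[of "real (K choose i)" i "K - i"] by simp
  have D: "(Bsum K j has_real_derivative (\<Sum>i\<in>{j..K}. b' i)) (at p)"
    unfolding Bsum_def by (rule DERIV_sum) (rule d)
  have bT: "b' i = T (i - 1) - T i" if i: "1 \<le> i" "i \<le> K" for i
  proof -
    have e1: "real (K choose i) * real i = real K * real ((K - 1) choose (i - 1))"
    proof -
      have "i * (K choose i) = K * ((K - 1) choose (i - 1))" using times_binomial_minus1_eq[of i K] i by simp
      then have "real (i * (K choose i)) = real (K * ((K - 1) choose (i - 1)))" by (rule arg_cong)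
      then show ?thesis by (simp only: of_nat_mult mult.commute)
    qed
    have e2: "real (K choose i) * real (K - i) = real K * real ((K - 1) choose i)"
    proof -
      have "real ((K - i) * (K choose i)) = real (K * ((K - 1) choose i))" using binomial_absorb_comp[of K i] by (rule arg_cong)
      then show ?thesis by (simp only: of_nat_mult mult.commute)
    qed
    have x1: "K - 1 - (i - 1) = K - i" using i by simp
    have x2: "K - i - 1 = K - 1 - i" by simp
    have "b' i = (real (K choose i) * real i) * p ^ (i - 1) * (1 - p) ^ (K - i)
               - (real (K choose i) * real (K - i)) * p ^ i * (1 - p) ^ (K - i - 1)"
      unfolding b'_def by (simp only: right_diff_distrib mult.assoc)
    also have "\<dots> = T (i - 1) - T i"
      unfolding e1 e2 T_def x1 x2 by simp
    finally show ?thesis .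
  qed
  have "(\<Sum>i\<in>{j..K}. b' i) = (\<Sum>i\<in>{Suc (j - 1)..K}. T (i - 1) - T i)"
    using assms by (intro sum.cong) (auto simp: bT)
  also have "\<dots> = T (j - 1) - T K"
    using assms by (intro telescope_aux) simp
  also have "T K = 0" unfolding T_def using assms by simp
  also have "T (j - 1) = fact K / (fact (j - 1) * fact (K - j)) * p ^ (j - 1) * (1 - p) ^ (K - j)"
  proof -
    have c: "real ((K - 1) choose (j - 1)) = fact (K - 1) / (fact (j - 1) * fact (K - j))"
      using assms by (subst binomial_fact) auto
    have f: "fact K = real K * fact (K - 1)"
      using assms fact_reduce[of K] by simp
    have x: "K - 1 - (j - 1) = K - j" using assms by simp
    show ?thesis unfolding T_def c f x by simp
  qed
  finally show ?thesis using D by simp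
qed

lemma (in prob_space) order_stat_prob:
  fixes X :: "nat \<Rightarrow> 'a \<Rightarrow> real"
  assumes indep: "indep_vars (\<lambda>_. borel) X {..<K}"
    and meas: "\<And>k. k < K \<Longrightarrow> X k \<in> borel_measurable M"
    and G: "\<And>k. k < K \<Longrightarrow> prob {\<omega>\<in>space M. X k \<omega> \<le> a} = g"
    and j: "1 \<le> j" "j \<le> K"
  shows "{\<omega>\<in>space M. order_stat K (\<lambda>k. X k \<omega>) j \<le> a} \<in> events"
    and "prob {\<omega>\<in>space M. order_stat K (\<lambda>k. X k \<omega>) j \<le> a} = Bsum K j g"
proof -
  define A where "A S k = (if k \<in> S then {..a} else {a<..})" for S :: "nat set" and k
  define E where "E S = (\<Inter>k\<in>{..<K}. X k -` A S k \<inter> space M)" for S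
  define SS where "SS = {S. S \<subseteq> {..<K} \<and> j \<le> card S}"
  have K0: "{..<K} \<noteq> {}"
  proof -
    have "0 \<in> {..<K}" using j by simp
    then show ?thesis by blast
  qed
  have finSS: "finite SS" unfolding SS_def by (rule finite_subset[of _ "Pow {..<K}"]) auto
  have Aev: "X k -` A S k \<inter> space M \<in> events" if "k < K" for S k
    using meas[OF that] unfolding A_def by (auto intro!: measurable_sets[of _ M borel])
  have Eev: "E S \<in> events" for S
    unfolding E_def using K0 by (intro sets.finite_INT) (auto intro: Aev)
  have pA: "prob (X k -` A S k \<inter> space M) = (if k \<in> S then g else 1 - g)" if "k < K" for S k
  proof (cases "k \<in> S")
    case True
    have "X k -` A S k \<inter> space M = {\<omega>\<in>space M. X k \<omega> \<le> a}" using True by (auto simp: A_def)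
    then show ?thesis using G[OF that] True by simp
  next
    case False
    have ev: "{\<omega>\<in>space M. X k \<omega> \<le> a} \<in> events" using meas[OF that] by measurable
    have "X k -` A S k \<inter> space M = space M - {\<omega>\<in>space M. X k \<omega> \<le> a}" using False by (auto simp: A_def)
    then show ?thesis using G[OF that] False prob_compl[OF ev] by simp
  qed
  have pE: "prob (E S) = g ^ card S * (1 - g) ^ (K - card S)" if "S \<subseteq> {..<K}" for S
  proof -
    have "prob (E S) = (\<Prod>k\<in>{..<K}. prob (X k -` A S k \<inter> space M))"
      unfolding E_def
      by (rule indep_varsD[OF indep K0]) (auto simp: A_def)
    also have "\<dots> = (\<Prod>k\<in>{..<K}. if k \<in> S then g else 1 - g)"
      by (intro prod.cong refl) (simp add: pA)
    also have "\<dots> = g ^ card ({..<K} \<inter> S) * (1 - g) ^ card ({..<K} \<inter> - S)"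
      by (simp add: prod.If_cases)
    also have "{..<K} \<inter> S = S" using that by auto
    also have "card ({..<K} \<inter> - S) = K - card S"
    proof -
      have "{..<K} \<inter> - S = {..<K} - S" by auto
      then show ?thesis using that by (simp add: card_Diff_subset finite_subset)
    qed
    finally show ?thesis .
  qed
  have Eiff: "\<omega> \<in> E S \<longleftrightarrow> \<omega> \<in> space M \<and> {k\<in>{..<K}. X k \<omega> \<le> a} = S"
    if "S \<subseteq> {..<K}" for S \<omega>
    using that K0 unfolding E_def A_def by (auto split: if_splits; force)
  have U: "{\<omega>\<in>space M. order_stat K (\<lambda>k. X k \<omega>) j \<le> a} = (\<Union>S\<in>SS. E S)"
  proof (intro set_eqI iffI)
    fix \<omega> assume "\<omega> \<in> {\<omega>\<in>space M. order_stat K (\<lambda>k. X k \<omega>) j \<le> a}"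
    then have "\<omega> \<in> space M" "j \<le> card {k\<in>{..<K}. X k \<omega> \<le> a}"
      using order_stat_le_iff[OF j] by auto
    moreover have "\<omega> \<in> E {k\<in>{..<K}. X k \<omega> \<le> a}"
      using \<open>\<omega> \<in> space M\<close> by (subst Eiff) auto
    ultimately show "\<omega> \<in> (\<Union>S\<in>SS. E S)"
      by (intro UN_I[of "{k\<in>{..<K}. X k \<omega> \<le> a}"]) (auto simp: SS_def)
  next
    fix \<omega> assume "\<omega> \<in> (\<Union>S\<in>SS. E S)"
    then obtain S where "S \<in> SS" "\<omega> \<in> E S" by auto
    then show "\<omega> \<in> {\<omega>\<in>space M. order_stat K (\<lambda>k. X k \<omega>) j \<le> a}"
      using order_stat_le_iff[OF j] Eiff[of S \<omega>] by (auto simp: SS_def)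
  qed
  show "{\<omega>\<in>space M. order_stat K (\<lambda>k. X k \<omega>) j \<le> a} \<in> events"
    unfolding U using finSS Eev by auto
  have disj: "disjoint_family_on E SS"
    unfolding disjoint_family_on_def
  proof (intro ballI impI)
    fix S T assume "S \<in> SS" "T \<in> SS" "S \<noteq> T"
    then show "E S \<inter> E T = {}" using Eiff[of S] Eiff[of T] by (auto simp: SS_def)
  qed
  have "prob {\<omega>\<in>space M. order_stat K (\<lambda>k. X k \<omega>) j \<le> a} = (\<Sum>S\<in>SS. prob (E S))"
    unfolding U using finSS Eev disj by (intro finite_measure_finite_Union) auto
  also have "\<dots> = (\<Sum>S\<in>SS. g ^ card S * (1 - g) ^ (K - card S))"
    by (intro sum.cong refl) (auto simp: SS_def pE)
  also have "\<dots> = (\<Sum>i\<in>{j..K}. \<Sum>S\<in>{S\<in>SS. card S = i}. g ^ card S * (1 - g) ^ (K - card S))"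
  proof (rule sum.group[symmetric, OF finSS])
    show "card ` SS \<subseteq> {j..K}"
      unfolding SS_def using card_mono[of "{..<K}"] by fastforce
  qed simp
  also have "\<dots> = (\<Sum>i\<in>{j..K}. real (K choose i) * g ^ i * (1 - g) ^ (K - i))"
  proof (intro sum.cong refl)
    fix i assume i: "i \<in> {j..K}"
    have "{S\<in>SS. card S = i} = {S. S \<subseteq> {..<K} \<and> card S = i}"
      using i by (auto simp: SS_def)
    then have c: "card {S\<in>SS. card S = i} = K choose i" by (simp add: n_subsets)
    have "(\<Sum>S\<in>{S\<in>SS. card S = i}. g ^ card S * (1 - g) ^ (K - card S))
        = (\<Sum>S\<in>{S\<in>SS. card S = i}. g ^ i * (1 - g) ^ (K - i))"
      by (intro sum.cong refl) auto
    also have "\<dots> = real (K choose i) * g ^ i * (1 - g) ^ (K - i)"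
      using c by simp
    finally show "(\<Sum>S\<in>{S\<in>SS. card S = i}. g ^ card S * (1 - g) ^ (K - card S))
        = real (K choose i) * g ^ i * (1 - g) ^ (K - i)" .
  qed
  finally show "prob {\<omega>\<in>space M. order_stat K (\<lambda>k. X k \<omega>) j \<le> a} = Bsum K j g"
    by (simp add: Bsum_def)
qed

lemma four_ennreal: "0 \<le> a \<Longrightarrow> 4 * ennreal (a / 4) = ennreal (a::real)"
  by (metis ennreal_mult'' ennreal_numeral times_divide_eq_left nonzero_mult_div_cancel_left zero_neq_numeral mult.commute zero_le_numeral)

lemma nn_integral_even:
  fixes h :: "real \<Rightarrow> ennreal"
  assumes [measurable]: "h \<in> borel_measurable borel" and ev: "\<And>x. h (- x) = h x"
  shows "(\<integral>\<^sup>+x. h x \<partial>lborel) = 2 * (\<integral>\<^sup>+x. h x * indicator {0<..} x \<partial>lborel)"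
proof -
  have "(\<integral>\<^sup>+x. h x \<partial>lborel) = (\<integral>\<^sup>+x. h x * indicator {0<..} x + h x * indicator {..<0} x \<partial>lborel)"
    by (intro nn_integral_cong_AE AE_I[where N="{0}"]) (auto split: split_indicator)
  also have "\<dots> = (\<integral>\<^sup>+x. h x * indicator {0<..} x \<partial>lborel) + (\<integral>\<^sup>+x. h x * indicator {..<0} x \<partial>lborel)"
    by (intro nn_integral_add) auto
  also have "(\<integral>\<^sup>+x. h x * indicator {..<0} x \<partial>lborel) = (\<integral>\<^sup>+x. h (0 + (-1) * x) * indicator {..<0} (0 + (-1) * x) \<partial>lborel)"
    using nn_integral_real_affine[of "\<lambda>x. h x * indicator {..<0} x" "-1" 0] by simp
  also have "\<dots> = (\<integral>\<^sup>+x. h x * indicator {0<..} x \<partial>lborel)"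
    by (intro nn_integral_cong) (auto simp: ev split: split_indicator)
  finally show ?thesis by (simp add: mult_2)
qed

lemma inner_fixed_s:
  fixes s t :: real assumes t: "0 \<le> t"
  shows "(\<integral>\<^sup>+x. ennreal (x * exp (- (x\<^sup>2 * (1 + s\<^sup>2))) * indicator {..t} (x\<^sup>2 * (1 + s\<^sup>2))) * indicator {0<..} x \<partial>lborel)
       = ennreal ((1 - exp (- t)) / (2 * (1 + s\<^sup>2)))"
proof -
  define c where "c = 1 + s\<^sup>2"
  have c: "c > 0" unfolding c_def by (simp add: add_pos_nonneg)
  define b where "b = sqrt (t / c)"
  have b: "b \<ge> 0" "b\<^sup>2 * c = t" unfolding b_def using c t by auto
  have iff: "x\<^sup>2 * c \<le> t \<longleftrightarrow> x \<le> b" if "x > 0" for x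
  proof -
    have "x\<^sup>2 * c \<le> t \<longleftrightarrow> x\<^sup>2 * c \<le> b\<^sup>2 * c" using b by simp
    also have "\<dots> \<longleftrightarrow> x\<^sup>2 \<le> b\<^sup>2" using c by simp
    also have "\<dots> \<longleftrightarrow> x \<le> b" using that b by (simp add: power_mono_iff)
    finally show ?thesis .
  qed
  have "(\<integral>\<^sup>+x. ennreal (x * exp (- (x\<^sup>2 * (1 + s\<^sup>2))) * indicator {..t} (x\<^sup>2 * (1 + s\<^sup>2))) * indicator {0<..} x \<partial>lborel)
      = (\<integral>\<^sup>+x. ennreal (x * exp (- (x\<^sup>2 * c))) * indicator {0..b} x \<partial>lborel)"
    by (intro nn_integral_cong_AE AE_I[where N="{0}"])
       (auto simp: c_def[symmetric] iff split: split_indicator)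
  also have "\<dots> = ennreal ((- exp (- (b\<^sup>2 * c)) / (2 * c)) - (- exp (- (0\<^sup>2 * c)) / (2 * c)))"
  proof (rule nn_integral_FTC_Icc)
    fix x :: real assume "x \<in> {0..b}"
    show "((\<lambda>x. - exp (- (x\<^sup>2 * c)) / (2 * c)) has_real_derivative x * exp (- (x\<^sup>2 * c))) (at x)"
      using c by (auto intro!: derivative_eq_intros simp: field_simps)
  qed (use b in auto)
  also have "\<dots> = ennreal ((1 - exp (- t)) / (2 * (1 + s\<^sup>2)))"
    using b c by (simp add: c_def field_simps)
  finally show ?thesis .
qed

lemma quadrant:
  fixes t :: real assumes t: "0 \<le> t"
  shows "(\<integral>\<^sup>+x. (\<integral>\<^sup>+y. ennreal (exp (- (x\<^sup>2 + y\<^sup>2)) * indicator {..t} (x\<^sup>2 + y\<^sup>2)) * indicator {0<..} y \<partial>lborel)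
            * indicator {0<..} x \<partial>lborel) = ennreal (pi / 4 * (1 - exp (- t)))"
proof -
  let ?H = "\<lambda>x s. ennreal (x * exp (- (x\<^sup>2 * (1 + s\<^sup>2))) * indicator {..t} (x\<^sup>2 * (1 + s\<^sup>2))) * indicator {0<..} s * indicator {0<..} x"
  have step1: "(\<integral>\<^sup>+y. ennreal (exp (- (x\<^sup>2 + y\<^sup>2)) * indicator {..t} (x\<^sup>2 + y\<^sup>2)) * indicator {0<..} y \<partial>lborel)
            * indicator {0<..} x = (\<integral>\<^sup>+s. ?H x s \<partial>lborel)" for x :: real
  proof (cases "x > 0")
    case True
    have "(\<integral>\<^sup>+y. ennreal (exp (- (x\<^sup>2 + y\<^sup>2)) * indicator {..t} (x\<^sup>2 + y\<^sup>2)) * indicator {0<..} y \<partial>lborel)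
        = \<bar>x\<bar> * (\<integral>\<^sup>+s. ennreal (exp (- (x\<^sup>2 + (0 + x * s)\<^sup>2)) * indicator {..t} (x\<^sup>2 + (0 + x * s)\<^sup>2)) * indicator {0<..} (0 + x * s) \<partial>lborel)"
      using True by (intro nn_integral_real_affine) auto
    also have "\<dots> = (\<integral>\<^sup>+s. ?H x s \<partial>lborel)"
      using True
      by (subst nn_integral_cmult[symmetric])
         (auto intro!: nn_integral_cong simp: ennreal_mult[symmetric] zero_less_mult_iff power_mult_distrib
               algebra_simps split: split_indicator)
    finally show ?thesis using True by simp
  next
    case False then show ?thesis by simp
  qed
  have "(\<integral>\<^sup>+x. (\<integral>\<^sup>+y. ennreal (exp (- (x\<^sup>2 + y\<^sup>2)) * indicator {..t} (x\<^sup>2 + y\<^sup>2)) * indicator {0<..} y \<partial>lborel)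
            * indicator {0<..} x \<partial>lborel) = (\<integral>\<^sup>+x. \<integral>\<^sup>+s. ?H x s \<partial>lborel \<partial>lborel)"
    by (rule nn_integral_cong) (rule step1)
  also have "\<dots> = (\<integral>\<^sup>+s. \<integral>\<^sup>+x. ?H x s \<partial>lborel \<partial>lborel)"
    by (rule lborel_pair.Fubini') measurable
  also have "\<dots> = (\<integral>\<^sup>+s. ennreal ((1 - exp (- t)) / (2 * (1 + s\<^sup>2))) * indicator {0<..} s \<partial>lborel)"
  proof (intro nn_integral_cong)
    fix s :: real
    have "(\<integral>\<^sup>+x. ?H x s \<partial>lborel) = (\<integral>\<^sup>+x. ennreal (x * exp (- (x\<^sup>2 * (1 + s\<^sup>2))) * indicator {..t} (x\<^sup>2 * (1 + s\<^sup>2))) * indicator {0<..} x \<partial>lborel) * indicator {0<..} s"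
      by (subst nn_integral_multc[symmetric]) (auto intro!: nn_integral_cong simp: ac_simps)
    then show "(\<integral>\<^sup>+x. ?H x s \<partial>lborel) = ennreal ((1 - exp (- t)) / (2 * (1 + s\<^sup>2))) * indicator {0<..} s"
      using inner_fixed_s[OF t, of s] by simp
  qed
  also have "\<dots> = (\<integral>\<^sup>+s. ennreal ((1 - exp (- t)) / (2 * (1 + s\<^sup>2))) * indicator {0..} s \<partial>lborel)"
    by (intro nn_integral_cong_AE AE_I[where N="{0}"]) (auto split: split_indicator)
  also have "\<dots> = ennreal ((1 - exp (- t)) * (pi / 2) / 2 - (1 - exp (- t)) * arctan 0 / 2)"
  proof (rule nn_integral_FTC_atLeast)
    show "((\<lambda>s. (1 - exp (- t)) * arctan s / 2) \<longlongrightarrow> (1 - exp (- t)) * (pi / 2) / 2) at_top"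
      by (intro tendsto_intros) (simp_all add: tendsto_arctan_at_top)
    fix s :: real assume "0 \<le> s"
    show "((\<lambda>s. (1 - exp (- t)) * arctan s / 2) has_real_derivative (1 - exp (- t)) / (2 * (1 + s\<^sup>2))) (at s)"
      by (auto intro!: derivative_eq_intros simp: field_simps power2_eq_square add_nonneg_eq_0_iff)
    show "0 \<le> (1 - exp (- t)) / (2 * (1 + s\<^sup>2))"
      using t by (auto intro!: divide_nonneg_pos simp: add_pos_nonneg)
  qed measurable
  also have "\<dots> = ennreal (pi / 4 * (1 - exp (- t)))" by (simp add: mult.commute)
  finally show ?thesis .
qed


lemma plane:
  fixes t :: real assumes t: "0 \<le> t"
  shows "(\<integral>\<^sup>+x. \<integral>\<^sup>+y. ennreal (exp (- (x\<^sup>2 + y\<^sup>2)) * indicator {..t} (x\<^sup>2 + y\<^sup>2)) \<partial>lborel \<partial>lborel)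
       = ennreal (pi * (1 - exp (- t)))"
proof -
  let ?g = "\<lambda>x y. ennreal (exp (- (x\<^sup>2 + y\<^sup>2)) * indicator {..t} (x\<^sup>2 + y\<^sup>2))"
  have i1: "(\<integral>\<^sup>+y. ?g x y \<partial>lborel) = 2 * (\<integral>\<^sup>+y. ?g x y * indicator {0<..} y \<partial>lborel)" for x
    by (rule nn_integral_even) auto
  have "(\<integral>\<^sup>+x. \<integral>\<^sup>+y. ?g x y \<partial>lborel \<partial>lborel) = (\<integral>\<^sup>+x. 2 * (\<integral>\<^sup>+y. ?g x y * indicator {0<..} y \<partial>lborel) \<partial>lborel)"
    by (rule nn_integral_cong) (rule i1)
  also have "\<dots> = 2 * (\<integral>\<^sup>+x. (2 * (\<integral>\<^sup>+y. ?g x y * indicator {0<..} y \<partial>lborel)) * indicator {0<..} x \<partial>lborel)"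
    by (rule nn_integral_even) auto
  also have "\<dots> = 4 * (\<integral>\<^sup>+x. (\<integral>\<^sup>+y. ?g x y * indicator {0<..} y \<partial>lborel) * indicator {0<..} x \<partial>lborel)"
  proof -
    have "(\<integral>\<^sup>+x. (2 * (\<integral>\<^sup>+y. ?g x y * indicator {0<..} y \<partial>lborel)) * indicator {0<..} x \<partial>lborel)
       = (\<integral>\<^sup>+x. 2 * ((\<integral>\<^sup>+y. ?g x y * indicator {0<..} y \<partial>lborel) * indicator {0<..} x) \<partial>lborel)"
      by (simp add: mult.assoc)
    also have "\<dots> = 2 * (\<integral>\<^sup>+x. (\<integral>\<^sup>+y. ?g x y * indicator {0<..} y \<partial>lborel) * indicator {0<..} x \<partial>lborel)"
      by (rule nn_integral_cmult) measurable
    finally show ?thesis by (simp add: mult.assoc[symmetric])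
  qed
  also have "\<dots> = 4 * ennreal (pi / 4 * (1 - exp (- t)))"
    using quadrant[OF t] by simp
  also have "\<dots> = ennreal (pi * (1 - exp (- t)))"
  proof -
    have X: "0 \<le> pi / 4 * (1 - exp (- t))" using t by simp
    then show ?thesis using four_ennreal[of "pi * (1 - exp (- t))"] by simp
  qed
  finally show ?thesis .
qed

lemma lborel_complex:
  "distr (lborel \<Otimes>\<^sub>M lborel) borel (\<lambda>(x, y). Complex x y) = (lborel :: complex measure)"
proof (rule lborel_eqI[symmetric])
  fix l u :: complex
  assume lu: "\<And>b. b \<in> Basis \<Longrightarrow> l \<bullet> b \<le> u \<bullet> b"
  then have le: "Re l \<le> Re u" "Im l \<le> Im u"
    using lu[of 1] lu[of \<i>] by (auto simp: Basis_complex_def inner_complex_def)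
  have m: "(\<lambda>(x, y). Complex x y) \<in> borel_measurable (lborel \<Otimes>\<^sub>M lborel)"
    by (auto simp: borel_measurable_complex_iff split_beta')
  have pre: "(\<lambda>(x, y). Complex x y) -` box l u \<inter> space (lborel \<Otimes>\<^sub>M lborel :: (real \<times> real) measure)
      = {Re l<..<Re u} \<times> {Im l<..<Im u}"
    by (auto simp: box_def Basis_complex_def inner_complex_def space_pair_measure)
  show "emeasure (distr (lborel \<Otimes>\<^sub>M lborel) borel (\<lambda>(x, y). Complex x y)) (box l u) = (\<Prod>b\<in>Basis. (u - l) \<bullet> b)"
    using le
    by (simp add: emeasure_distr[OF m] pre lborel.emeasure_pair_measure_Times Basis_complex_def
                  inner_complex_def ennreal_mult[symmetric])
qed simp

lemma nn_integral_complex: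
  fixes f :: "complex \<Rightarrow> ennreal"
  assumes [measurable]: "f \<in> borel_measurable borel"
  shows "(\<integral>\<^sup>+z. f z \<partial>lborel) = (\<integral>\<^sup>+x. \<integral>\<^sup>+y. f (Complex x y) \<partial>lborel \<partial>lborel)"
proof -
  have m: "(\<lambda>(x, y). Complex x y) \<in> measurable (lborel \<Otimes>\<^sub>M lborel) borel"
    by (auto simp: borel_measurable_complex_iff split_beta')
  have "(\<integral>\<^sup>+z. f z \<partial>lborel) = (\<integral>\<^sup>+z. f z \<partial>distr (lborel \<Otimes>\<^sub>M lborel) borel (\<lambda>(x, y). Complex x y))"
    by (simp add: lborel_complex)
  also have "\<dots> = (\<integral>\<^sup>+p. f (case p of (x, y) \<Rightarrow> Complex x y) \<partial>(lborel \<Otimes>\<^sub>M lborel))"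
    by (rule nn_integral_distr[OF m]) simp
  also have "\<dots> = (\<integral>\<^sup>+x. \<integral>\<^sup>+y. f (Complex x y) \<partial>lborel \<partial>lborel)"
  proof -
    have mf: "(\<lambda>p. f (case p of (x, y) \<Rightarrow> Complex x y)) \<in> borel_measurable (lborel \<Otimes>\<^sub>M lborel)"
      by (rule measurable_compose[OF m]) simp
    show ?thesis using lborel.nn_integral_fst[OF mf] by simp
  qed
  finally show ?thesis .
qed

lemma cn_cdf:
  fixes t :: real assumes t: "0 \<le> t"
  shows "(\<integral>\<^sup>+z. ennreal (cn_density z) * indicator {z. (cmod z)\<^sup>2 \<le> t} z \<partial>lborel) = ennreal (1 - exp (- t))"
proof -
  have "(\<integral>\<^sup>+z. ennreal (cn_density z) * indicator {z. (cmod z)\<^sup>2 \<le> t} z \<partial>lborel)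
      = (\<integral>\<^sup>+x. \<integral>\<^sup>+y. ennreal (cn_density (Complex x y)) * indicator {z. (cmod z)\<^sup>2 \<le> t} (Complex x y) \<partial>lborel \<partial>lborel)"
    by (rule nn_integral_complex) (simp add: cn_density_def)
  also have "\<dots> = (\<integral>\<^sup>+x. \<integral>\<^sup>+y. ennreal (1 / pi) * ennreal (exp (- (x\<^sup>2 + y\<^sup>2)) * indicator {..t} (x\<^sup>2 + y\<^sup>2)) \<partial>lborel \<partial>lborel)"
    by (intro nn_integral_cong)
       (auto simp: cn_density_def cmod_power2 ennreal_mult[symmetric] split: split_indicator)
  also have "\<dots> = ennreal (1 / pi) * (\<integral>\<^sup>+x. \<integral>\<^sup>+y. ennreal (exp (- (x\<^sup>2 + y\<^sup>2)) * indicator {..t} (x\<^sup>2 + y\<^sup>2)) \<partial>lborel \<partial>lborel)"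
    by (simp add: nn_integral_cmult)
  also have "\<dots> = ennreal (1 - exp (- t))"
  proof -
    have "0 \<le> 1 - exp (- t)" using t by simp
    then show ?thesis by (subst plane[OF t]) (simp add: ennreal_mult[symmetric])
  qed
  finally show ?thesis .
qed

lemma tendsto_integral_at_within:
  fixes s :: "real \<Rightarrow> 'a \<Rightarrow> real" and w :: "'a \<Rightarrow> real"
  assumes meas: "\<And>t. s t \<in> borel_measurable M" "f \<in> borel_measurable M"
    and w: "integrable M w"
    and lim: "AE x in M. ((\<lambda>t. s t x) \<longlongrightarrow> f x) (at t0 within S)"
    and bound: "\<forall>\<^sub>F t in at t0 within S. AE x in M. norm (s t x) \<le> w x"
  shows "((\<lambda>t. integral\<^sup>L M (s t)) \<longlongrightarrow> integral\<^sup>L M f) (at t0 within S)"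
  unfolding tendsto_at_iff_sequentially
proof (intro allI impI)
  fix X :: "nat \<Rightarrow> real" assume X: "\<forall>i. X i \<in> S - {t0}" "X \<longlonglongrightarrow> t0"
  have XF: "filterlim X (at t0 within S) sequentially"
    using X by (auto simp: filterlim_at)
  from filterlim_iff[THEN iffD1, OF XF, rule_format, OF bound]
  obtain N where wN: "\<And>n. N \<le> n \<Longrightarrow> AE x in M. norm (s (X n) x) \<le> w x"
    by (auto simp: eventually_sequentially)
  show "((\<lambda>t. integral\<^sup>L M (s t)) \<circ> X) \<longlonglongrightarrow> integral\<^sup>L M f"
    unfolding comp_def
  proof (rule LIMSEQ_offset, rule integral_dominated_convergence)
    show "AE x in M. norm (s (X (n + N)) x) \<le> w x" for n
      by (rule wN) auto
    show "AE x in M. (\<lambda>n. s (X (n + N)) x) \<longlonglongrightarrow> f x"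
      using lim
    proof eventually_elim
      fix x assume "((\<lambda>t. s t x) \<longlongrightarrow> f x) (at t0 within S)"
      then have "(\<lambda>n. s (X n) x) \<longlonglongrightarrow> f x"
        by (rule filterlim_compose) (rule XF)
      then show "(\<lambda>n. s (X (n + N)) x) \<longlonglongrightarrow> f x"
        by (rule LIMSEQ_ignore_initial_segment)
    qed
  qed (use meas w in auto)
qed

lemma one_minus_exp_le: "1 - exp (- d) \<le> (d::real)"
  using exp_ge_add_one_self[of "- d"] by simp

lemma c_exp_le: fixes a c :: real assumes "0 \<le> c" "0 < a" shows "c * exp (- (a * c)) \<le> 1 / a"
proof -
  have "a * c \<le> exp (a * c)" using exp_ge_add_one_self[of "a * c"] by linarith
  then have "a * c * exp (- (a * c)) \<le> 1"
    by (simp add: exp_minus field_simps)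
  then show ?thesis using assms by (simp add: field_simps)
qed

lemma exp_diff_le:
  fixes a b c :: real
  assumes c: "0 \<le> c" and a: "0 < a" and ab: "a \<le> b"
  shows "\<bar>exp (- (a * c)) - exp (- (b * c))\<bar> \<le> (b - a) / a"
proof -
  have nn: "exp (- (b * c)) \<le> exp (- (a * c))" using ab c by (simp add: mult_right_mono)
  have "exp (- (a * c)) - exp (- (b * c)) = exp (- (a * c)) * (1 - exp (- ((b - a) * c)))"
    by (simp add: algebra_simps exp_add[symmetric])
  also have "\<dots> \<le> exp (- (a * c)) * ((b - a) * c)"
    by (intro mult_left_mono one_minus_exp_le) simp
  also have "\<dots> = (b - a) * (c * exp (- (a * c)))" by simp
  also have "\<dots> \<le> (b - a) * (1 / a)"
    using ab by (intro mult_left_mono c_exp_le c a) simp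
  finally show ?thesis using nn by simp
qed

lemma exp_quot_bound:
  fixes y y0 c :: real
  assumes c: "0 \<le> c" and y0: "0 < y0" and y: "y0 / 2 < y" and ne: "y \<noteq> y0"
  shows "\<bar>(exp (- (y0 * c)) - exp (- (y * c))) / (y - y0)\<bar> \<le> 2 / y0"
proof -
  have m: "0 < min y y0" "y0 / 2 \<le> min y y0" using y y0 by auto
  have "\<bar>exp (- (y0 * c)) - exp (- (y * c))\<bar> \<le> \<bar>y - y0\<bar> / min y y0"
  proof (cases "y0 \<le> y")
    case True
    then show ?thesis using exp_diff_le[OF c y0 True] by (simp add: min_def)
  next
    case False
    then have "y \<le> y0" "0 < y" using y y0 by auto
    then show ?thesis using exp_diff_le[OF c \<open>0 < y\<close> \<open>y \<le> y0\<close>] False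
      by (simp add: min_def abs_minus_commute)
  qed
  also have "\<dots> \<le> \<bar>y - y0\<bar> / (y0 / 2)"
    using m y0 by (intro divide_left_mono) auto
  finally have "\<bar>exp (- (y0 * c)) - exp (- (y * c))\<bar> \<le> \<bar>y - y0\<bar> * (2 / y0)" by simp
  then show ?thesis using ne by (simp add: abs_divide divide_le_eq mult.commute)
qed

lemma fejer_meas[measurable]: "fejer M \<in> borel_measurable borel"
  unfolding fejer_def[abs_def] by measurable

lemma lower_gamma_2: assumes "0 \<le> x" shows "lower_gamma 2 x = 1 - (1 + x) * exp (- x)"
proof -
  have "lower_gamma 2 x = (LBINT t=0..x. t powr 1 * exp (- t))"
    unfolding lower_gamma_def by simp
  also have "\<dots> = (LBINT t=0..x. t * exp (- t))"
    using assms by (intro interval_integral_cong) (auto simp: einterval_iff min_def max_def)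
  also have "\<dots> = (LBINT t=ereal 0..ereal x. t * exp (- t))" by (simp add: zero_ereal_def)
  also have "\<dots> = (- (1 + x) * exp (- x)) - (- (1 + 0) * exp (- 0))"
  proof (rule interval_integral_FTC_finite)
    show "continuous_on {min 0 x..max 0 x} (\<lambda>t. t * exp (- t))"
      by (intro continuous_intros)
    fix t :: real
    show "((\<lambda>t. - (1 + t) * exp (- t)) has_vector_derivative t * exp (- t)) (at t within {min 0 x..max 0 x})"
      by (auto intro!: derivative_eq_intros simp: has_real_derivative_iff_has_vector_derivative[symmetric] algebra_simps)
  qed
  finally show ?thesis by (simp add: algebra_simps)
qed

lemma lower_gamma_2_pos: assumes "0 < x" shows "lower_gamma 2 x > 0"
proof -
  have "1 + x + x\<^sup>2 / 2 \<le> exp x" using assms by (intro exp_lower_Taylor_quadratic) simp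
  then have "1 + x < exp x" using assms by (smt (verit) zero_less_power divide_pos_pos)
  then have "(1 + x) * exp (- x) < 1"
    by (simp add: exp_minus field_simps)
  then show ?thesis using lower_gamma_2[of x] assms by simp
qed

context
  fixes M :: nat and \<alpha> \<phi> R \<Delta> tb :: real
  assumes M1: "1 \<le> M" and \<alpha>0: "0 < \<alpha>" and \<phi>0: "0 < \<phi>" and R0: "0 < R" and \<Delta>0: "0 < \<Delta>"
begin

definition Phi :: "real \<Rightarrow> real \<Rightarrow> real \<Rightarrow> real" where
  "Phi y r t = 1 - exp (- (y * (1 + r powr \<alpha>) / fejer M (pi * (tb - t))))"

definition Kf :: "real \<Rightarrow> real" where
  "Kf y = (\<integral>p. pos_density \<phi> R \<Delta> tb (fst p) (snd p) * Phi y (fst p) (snd p) \<partial>(lborel \<Otimes>\<^sub>M lborel))"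

lemma gam_pos: "lower_gamma 2 (R * \<phi>) > 0"
  using R0 \<phi>0 by (intro lower_gamma_2_pos) simp

lemma pd_nonneg: "0 \<le> pos_density \<phi> R \<Delta> tb r t"
  unfolding pos_density_def using gam_pos \<Delta>0 by (auto split: split_indicator)

lemma pd_meas[measurable]: "(\<lambda>p. pos_density \<phi> R \<Delta> tb (fst p) (snd p)) \<in> borel_measurable (lborel \<Otimes>\<^sub>M lborel)"
  unfolding pos_density_def by measurable

lemma pd_integrable: "integrable (lborel \<Otimes>\<^sub>M lborel) (\<lambda>p. pos_density \<phi> R \<Delta> tb (fst p) (snd p))"
proof -
  let ?S = "{0..R} \<times> {tb - \<Delta>..tb + \<Delta>}"
  let ?f = "\<lambda>p::real\<times>real. \<phi>\<^sup>2 * exp (- \<phi> * fst p) / (2 * \<Delta> * lower_gamma 2 (R * \<phi>)) * fst p"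
  have "integrable lborel (\<lambda>p. indicat_real ?S p *\<^sub>R ?f p)"
    by (intro borel_integrable_compact compact_Times compact_Icc continuous_intros) (use gam_pos \<Delta>0 in auto)
  then have "integrable (lborel \<Otimes>\<^sub>M lborel) (\<lambda>p. indicat_real ?S p *\<^sub>R ?f p)"
    by (simp add: lborel_prod)
  moreover have "(\<lambda>p. indicat_real ?S p *\<^sub>R ?f p) = (\<lambda>p. pos_density \<phi> R \<Delta> tb (fst p) (snd p))"
    by (rule ext) (simp add: pos_density_def)
  ultimately show ?thesis by simp
qed

lemma Phi_bounds: assumes "0 \<le> y" shows "0 \<le> Phi y r t" "Phi y r t \<le> 1"
proof -
  have "0 \<le> y * (1 + r powr \<alpha>) / fejer M (pi * (tb - t))"
    using assms by (intro divide_nonneg_nonneg mult_nonneg_nonneg) (auto simp: fejer_nonneg add_nonneg_nonneg)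
  then show "0 \<le> Phi y r t" "Phi y r t \<le> 1" unfolding Phi_def by auto
qed

lemma Phi_meas[measurable]: "(\<lambda>p. Phi y (fst p) (snd p)) \<in> borel_measurable (lborel \<Otimes>\<^sub>M lborel)"
  unfolding Phi_def by measurable

lemma integrable_pd_Phi: assumes "0 \<le> y"
  shows "integrable (lborel \<Otimes>\<^sub>M lborel) (\<lambda>p. pos_density \<phi> R \<Delta> tb (fst p) (snd p) * Phi y (fst p) (snd p))"
proof (rule Bochner_Integration.integrable_bound[OF pd_integrable])
  show "AE p in lborel \<Otimes>\<^sub>M lborel. norm (pos_density \<phi> R \<Delta> tb (fst p) (snd p) * Phi y (fst p) (snd p))
          \<le> norm (pos_density \<phi> R \<Delta> tb (fst p) (snd p))"
    using Phi_bounds[OF assms] pd_nonneg by (auto intro!: mult_left_le simp: abs_mult)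
qed measurable

lemma Fpi_eq_Kf:
  assumes lam: "0 < lam" and y: "0 \<le> y"
  shows "Fpi M \<alpha> \<phi> lam R \<Delta> tb y = Kf y"
proof -
  let ?I = "\<lambda>r t. (1 - exp (- (y * (1 + r powr \<alpha>) / fejer M (pi * (tb - t)))))
        * (lam * \<phi>\<^sup>2 * exp (- \<phi> * r) / (2 * \<Delta> * lam * lower_gamma 2 (R * \<phi>))) * r"
  let ?f = "\<lambda>r t. pos_density \<phi> R \<Delta> tb r t * Phi y r t"
  have inner: "(LBINT r=0..R. ?I r t) = (LBINT r. indicator {0..R} r * ?I r t)" for t
    using R0 by (simp add: zero_ereal_def interval_integral_Icc set_lebesgue_integral_def)
  have "Fpi M \<alpha> \<phi> lam R \<Delta> tb y = (LBINT t=tb - \<Delta>..tb + \<Delta>. (LBINT r=0..R. ?I r t))"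
    unfolding Fpi_def ..
  also have "\<dots> = (LBINT t. indicator {tb - \<Delta>..tb + \<Delta>} t * (LBINT r=0..R. ?I r t))"
    using \<Delta>0 by (simp add: interval_integral_Icc set_lebesgue_integral_def)
  also have "\<dots> = (LBINT t. LBINT r. ?f r t)"
  proof (intro Bochner_Integration.integral_cong refl)
    fix t
    have "indicator {tb - \<Delta>..tb + \<Delta>} t * (LBINT r=0..R. ?I r t)
        = (LBINT r. indicator {tb - \<Delta>..tb + \<Delta>} t * (indicator {0..R} r * ?I r t))"
      unfolding inner by simp
    also have "\<dots> = (LBINT r. ?f r t)"
      using lam by (intro Bochner_Integration.integral_cong refl)
        (auto simp: pos_density_def Phi_def indicator_times mult_ac split: split_indicator)
    finally show "indicator {tb - \<Delta>..tb + \<Delta>} t * (LBINT r=0..R. ?I r t) = (LBINT r. ?f r t)" .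
  qed
  also have "\<dots> = (LINT (r, t)|(lborel \<Otimes>\<^sub>M lborel). ?f r t)"
  proof (rule lborel_pair.integral_snd)
    show "integrable (lborel \<Otimes>\<^sub>M lborel) (\<lambda>(r, t). ?f r t)"
      using integrable_pd_Phi[OF y] by (simp add: split_beta')
  qed
  also have "\<dots> = Kf y" unfolding Kf_def by (simp add: split_beta')
  finally show ?thesis .
qed


lemma AE_fejer_ne0: "AE p in lborel \<Otimes>\<^sub>M lborel. fejer M (pi * (tb - snd p)) \<noteq> 0"
proof -
  define Z where "Z = range (\<lambda>n::int. tb - 2 * real_of_int n / real M)"
  have Zn: "Z \<in> null_sets lborel" unfolding Z_def by (intro countable_imp_null_set_lborel) simp
  then have Zs: "Z \<in> sets borel" by (auto simp: null_sets_def)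
  have "UNIV \<times> Z \<in> null_sets (lborel \<Otimes>\<^sub>M lborel)"
    using Zn by (intro lborel.times_in_null_sets2) auto
  moreover have "{p \<in> space (lborel \<Otimes>\<^sub>M lborel). \<not> fejer M (pi * (tb - snd p)) \<noteq> 0} \<subseteq> UNIV \<times> Z"
  proof (rule subsetI)
    fix p assume "p \<in> {p \<in> space (lborel \<Otimes>\<^sub>M lborel). \<not> fejer M (pi * (tb - snd p)) \<noteq> 0}"
    then have f0: "fejer M (pi * (tb - snd p)) = 0" by simp
    define t where "t = snd p"
    define u where "u = pi * (tb - t)"
    have s0: "sin (u / 2) \<noteq> 0" using f0 M1 unfolding u_def t_def fejer_def by (auto split: if_splits)
    then have "(sin (real M * u / 2))\<^sup>2 = 0" using f0 M1 unfolding u_def t_def fejer_def by (auto split: if_splits)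
    then have "sin (real M * u / 2) = 0" by simp
    then obtain n :: int where n: "real M * u / 2 = real_of_int n * pi" using sin_zero_iff_int2 by blast
    have "pi * (real M * (tb - t)) = pi * (2 * real_of_int n)"
      using n unfolding u_def by (simp add: field_simps)
    then have "real M * (tb - t) = 2 * real_of_int n" by simp
    then have "t = tb - 2 * real_of_int n / real M"
      using M1 by (simp add: field_simps)
    then have "t \<in> Z" unfolding Z_def by blast
    then show "p \<in> UNIV \<times> Z" unfolding t_def by (cases p) auto
  qed
  ultimately show ?thesis by (rule AE_I')
qed

lemma cn_nonneg: "0 \<le> cn_density z"
  by (simp add: cn_density_def)

lemma gain_nonneg: "0 \<le> gain M \<alpha> tb x t z"
  using M1 by (simp add: gain_eq fejer_nonneg add_pos_nonneg)

lemma gain_meas[measurable]: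
  "(\<lambda>v. gain M \<alpha> tb (fst (fst v)) (snd (fst v)) (snd v)) \<in> borel_measurable ((lborel \<Otimes>\<^sub>M lborel) \<Otimes>\<^sub>M lborel)"
  using M1 by (simp add: gain_eq)

lemma gain_cdf:
  fixes P :: "'w measure" and Y :: "'w \<Rightarrow> (real \<times> real) \<times> complex"
  assumes D: "distributed P (lborel :: ((real \<times> real) \<times> complex) measure) Y
        (\<lambda>((x, t), z). ennreal (pos_density \<phi> R \<Delta> tb x t * cn_density z))"
    and y: "0 \<le> y"
  shows "emeasure P {\<omega> \<in> space P. gain M \<alpha> tb (fst (fst (Y \<omega>))) (snd (fst (Y \<omega>))) (snd (Y \<omega>)) \<le> y}
           = ennreal (Kf y)"
proof -
  let ?gf = "\<lambda>v. gain M \<alpha> tb (fst (fst v)) (snd (fst v)) (snd v)"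
  let ?A = "{v. ?gf v \<le> y}"
  let ?d = "\<lambda>v. ennreal (pos_density \<phi> R \<Delta> tb (fst (fst v)) (snd (fst v)) * cn_density (snd v))"
  have lb: "(lborel :: ((real \<times> real) \<times> complex) measure) = (lborel \<Otimes>\<^sub>M lborel) \<Otimes>\<^sub>M lborel"
    by (simp add: lborel_prod)
  have Asets: "?A \<in> sets (lborel :: ((real \<times> real) \<times> complex) measure)"
  proof -
    have "?gf -` {..y} \<inter> space ((lborel \<Otimes>\<^sub>M lborel) \<Otimes>\<^sub>M lborel) \<in> sets ((lborel \<Otimes>\<^sub>M lborel) \<Otimes>\<^sub>M lborel)"
      by (rule measurable_sets[OF gain_meas]) simp
    moreover have "?gf -` {..y} \<inter> space ((lborel \<Otimes>\<^sub>M lborel) \<Otimes>\<^sub>M lborel :: ((real \<times> real) \<times> complex) measure) = ?A"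
      by (auto simp: space_pair_measure)
    ultimately show ?thesis unfolding lb by simp
  qed
  have "emeasure P {\<omega> \<in> space P. ?gf (Y \<omega>) \<le> y} = emeasure P (Y -` ?A \<inter> space P)"
    by (intro arg_cong[where f="emeasure P"]) auto
  also have "\<dots> = (\<integral>\<^sup>+v. (\<lambda>((x, t), z). ennreal (pos_density \<phi> R \<Delta> tb x t * cn_density z)) v * indicator ?A v \<partial>lborel)"
    by (rule distributed_emeasure[OF D Asets])
  also have "\<dots> = (\<integral>\<^sup>+v. ?d v * indicator ?A v \<partial>((lborel \<Otimes>\<^sub>M lborel) \<Otimes>\<^sub>M lborel))"
    unfolding lb by (intro nn_integral_cong) (auto simp: split_beta')
  also have "\<dots> = (\<integral>\<^sup>+p. \<integral>\<^sup>+z. ?d (p, z) * indicator ?A (p, z) \<partial>lborel \<partial>(lborel \<Otimes>\<^sub>M lborel))"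
    by (rule lborel.nn_integral_fst[symmetric]) (simp add: cn_density_def[abs_def])
  also have "\<dots> = (\<integral>\<^sup>+p. ennreal (pos_density \<phi> R \<Delta> tb (fst p) (snd p) * Phi y (fst p) (snd p)) \<partial>(lborel \<Otimes>\<^sub>M lborel))"
  proof (rule nn_integral_cong_AE)
    show "AE p in lborel \<Otimes>\<^sub>M lborel. (\<integral>\<^sup>+z. ?d (p, z) * indicator ?A (p, z) \<partial>lborel)
            = ennreal (pos_density \<phi> R \<Delta> tb (fst p) (snd p) * Phi y (fst p) (snd p))"
      using AE_fejer_ne0
    proof eventually_elim
      fix p :: "real \<times> real" assume fne: "fejer M (pi * (tb - snd p)) \<noteq> 0"
      obtain x t where p: "p = (x, t)" by (cases p)
      define F where "F = fejer M (pi * (tb - t))"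
      define c where "c = 1 + x powr \<alpha>"
      have F0: "F > 0" using fne fejer_nonneg[of M] unfolding F_def p by (simp add: less_le)
      have c0: "c > 0" unfolding c_def by (simp add: add_pos_nonneg)
      have setq: "{z. gain M \<alpha> tb x t z \<le> y} = {z. (cmod z)\<^sup>2 \<le> y * c / F}"
      proof -
        have "gain M \<alpha> tb x t z \<le> y \<longleftrightarrow> (cmod z)\<^sup>2 \<le> y * c / F" for z
        proof -
          have "gain M \<alpha> tb x t z = ((cmod z)\<^sup>2 * F) / c"
            using M1 by (simp add: gain_eq F_def c_def)
          then have "gain M \<alpha> tb x t z \<le> y \<longleftrightarrow> (cmod z)\<^sup>2 * F \<le> y * c"
            using pos_divide_le_eq[OF c0] by simp
          also have "\<dots> \<longleftrightarrow> (cmod z)\<^sup>2 \<le> y * c / F"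
            using pos_le_divide_eq[OF F0] by simp
          finally show ?thesis .
        qed
        then show ?thesis by auto
      qed
      have "(\<integral>\<^sup>+z. ?d (p, z) * indicator ?A (p, z) \<partial>lborel)
          = (\<integral>\<^sup>+z. ennreal (pos_density \<phi> R \<Delta> tb x t) * (ennreal (cn_density z) * indicator {z. (cmod z)\<^sup>2 \<le> y * c / F} z) \<partial>lborel)"
        using setq pd_nonneg[of x t]
        by (intro nn_integral_cong) (auto simp: p ennreal_mult cn_nonneg split: split_indicator)
      also have "\<dots> = ennreal (pos_density \<phi> R \<Delta> tb x t) * (\<integral>\<^sup>+z. ennreal (cn_density z) * indicator {z. (cmod z)\<^sup>2 \<le> y * c / F} z \<partial>lborel)"
        by (rule nn_integral_cmult) (unfold cn_density_def, measurable)
      also have "(\<integral>\<^sup>+z. ennreal (cn_density z) * indicator {z. (cmod z)\<^sup>2 \<le> y * c / F} z \<partial>lborel) = ennreal (1 - exp (- (y * c / F)))"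
        by (rule cn_cdf) (use F0 c0 y in simp)
      also have "ennreal (pos_density \<phi> R \<Delta> tb x t) * ennreal (1 - exp (- (y * c / F))) = ennreal (pos_density \<phi> R \<Delta> tb (fst p) (snd p) * Phi y (fst p) (snd p))"
      proof -
        have e: "Phi y x t = 1 - exp (- (y * c / F))" unfolding Phi_def c_def F_def ..
        have X: "0 \<le> 1 - exp (- (y * c / F))" using F0 c0 y by simp
        show ?thesis unfolding p fst_conv snd_conv e using X pd_nonneg[of x t] by (simp add: ennreal_mult)
      qed
      finally show "(\<integral>\<^sup>+z. ?d (p, z) * indicator ?A (p, z) \<partial>lborel)
            = ennreal (pos_density \<phi> R \<Delta> tb (fst p) (snd p) * Phi y (fst p) (snd p))" .
    qed
  qed
  also have "\<dots> = ennreal (Kf y)"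
    unfolding Kf_def
    by (rule nn_integral_eq_integral[OF integrable_pd_Phi[OF y]])
       (use pd_nonneg Phi_bounds[OF y] in auto)
  finally show ?thesis .
qed


definition cf :: "real \<Rightarrow> real \<Rightarrow> real" where
  "cf r t = (1 + r powr \<alpha>) / fejer M (pi * (tb - t))"

definition Dk :: "real \<Rightarrow> real" where
  "Dk y = (\<integral>p. pos_density \<phi> R \<Delta> tb (fst p) (snd p) * (cf (fst p) (snd p) * exp (- (y * cf (fst p) (snd p)))) \<partial>(lborel \<Otimes>\<^sub>M lborel))"

lemma cf_nonneg: "0 \<le> cf r t"
  unfolding cf_def by (intro divide_nonneg_nonneg) (auto simp: fejer_nonneg add_nonneg_nonneg)

lemma cf_meas[measurable]: "(\<lambda>p. cf (fst p) (snd p)) \<in> borel_measurable (lborel \<Otimes>\<^sub>M lborel)"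
  unfolding cf_def by measurable

lemma Phi_cf: "Phi y r t = 1 - exp (- (y * cf r t))"
  unfolding Phi_def cf_def by simp

lemma Kf_0: "Kf 0 = 0"
  unfolding Kf_def by (simp add: Phi_cf)

lemma Kf_tendsto: assumes y0: "0 \<le> y0" shows "(Kf \<longlongrightarrow> Kf y0) (at y0 within {0..})"
  unfolding Kf_def[abs_def]
proof (rule tendsto_integral_at_within[where w="\<lambda>p. pos_density \<phi> R \<Delta> tb (fst p) (snd p)"])
  show "AE p in lborel \<Otimes>\<^sub>M lborel. ((\<lambda>y. pos_density \<phi> R \<Delta> tb (fst p) (snd p) * Phi y (fst p) (snd p))
          \<longlongrightarrow> pos_density \<phi> R \<Delta> tb (fst p) (snd p) * Phi y0 (fst p) (snd p)) (at y0 within {0..})"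
    unfolding Phi_cf by (intro AE_I2 tendsto_intros)
  show "\<forall>\<^sub>F y in at y0 within {0..}. AE p in lborel \<Otimes>\<^sub>M lborel.
          norm (pos_density \<phi> R \<Delta> tb (fst p) (snd p) * Phi y (fst p) (snd p)) \<le> pos_density \<phi> R \<Delta> tb (fst p) (snd p)"
    unfolding eventually_at_filter
  proof (intro always_eventually allI impI AE_I2)
    fix y :: real and p :: "real \<times> real" assume "y \<in> {0..}"
    then show "norm (pos_density \<phi> R \<Delta> tb (fst p) (snd p) * Phi y (fst p) (snd p)) \<le> pos_density \<phi> R \<Delta> tb (fst p) (snd p)"
      using Phi_bounds[of y] pd_nonneg by (auto simp: abs_mult intro!: mult_left_le)
  qed
qed (use pd_integrable in auto)

lemma Kf_continuous_on: "continuous_on {0..} Kf"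
  unfolding continuous_on_def using Kf_tendsto by auto

lemma Kf_deriv: assumes y0: "0 < y0" shows "(Kf has_real_derivative Dk y0) (at y0)"
proof -
  let ?pd = "\<lambda>p. pos_density \<phi> R \<Delta> tb (fst p) (snd p)"
  let ?c = "\<lambda>p. cf (fst p) (snd p)"
  let ?q = "\<lambda>y p. ?pd p * ((exp (- (y0 * ?c p)) - exp (- (y * ?c p))) / (y - y0))"
  have ev: "\<forall>\<^sub>F y in at y0. y0 / 2 < y \<and> y \<noteq> y0"
  proof -
    have 1: "\<forall>\<^sub>F y in at y0. y0 / 2 < y" using y0 by (intro order_tendstoD(1)[OF tendsto_ident_at]) simp
    have 2: "\<forall>\<^sub>F y in at y0. y \<noteq> y0" by (simp add: eventually_at_filter)
    from 1 2 show ?thesis by eventually_elim simp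
  qed
  have eq: "(Kf y - Kf y0) / (y - y0) = (\<integral>p. ?q y p \<partial>(lborel \<Otimes>\<^sub>M lborel))" if y: "0 < y" for y
  proof -
    have "Kf y - Kf y0 = (\<integral>p. ?pd p * Phi y (fst p) (snd p) - ?pd p * Phi y0 (fst p) (snd p) \<partial>(lborel \<Otimes>\<^sub>M lborel))"
      unfolding Kf_def using y y0
      by (intro Bochner_Integration.integral_diff[symmetric] integrable_pd_Phi) auto
    also have "\<dots> = (\<integral>p. ?pd p * (exp (- (y0 * ?c p)) - exp (- (y * ?c p))) \<partial>(lborel \<Otimes>\<^sub>M lborel))"
      by (intro Bochner_Integration.integral_cong refl) (simp add: Phi_cf right_diff_distrib)
    finally have "(Kf y - Kf y0) / (y - y0) = (\<integral>p. ?pd p * (exp (- (y0 * ?c p)) - exp (- (y * ?c p))) \<partial>(lborel \<Otimes>\<^sub>M lborel)) / (y - y0)"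
      by simp
    also have "\<dots> = (\<integral>p. ?pd p * (exp (- (y0 * ?c p)) - exp (- (y * ?c p))) / (y - y0) \<partial>(lborel \<Otimes>\<^sub>M lborel))"
      by (rule integral_divide_zero[symmetric])
    also have "\<dots> = (\<integral>p. ?q y p \<partial>(lborel \<Otimes>\<^sub>M lborel))"
      by (intro Bochner_Integration.integral_cong refl) (simp only: times_divide_eq_right)
    finally show ?thesis .
  qed
  have lim: "((\<lambda>y. \<integral>p. ?q y p \<partial>(lborel \<Otimes>\<^sub>M lborel)) \<longlongrightarrow> Dk y0) (at y0)"
    unfolding Dk_def
  proof (rule tendsto_integral_at_within[where w="\<lambda>p. ?pd p * (2 / y0)"])
    show "AE p in lborel \<Otimes>\<^sub>M lborel. ((\<lambda>y. ?q y p) \<longlongrightarrow> ?pd p * (?c p * exp (- (y0 * ?c p)))) (at y0)"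
    proof (intro AE_I2 tendsto_mult_left)
      fix p :: "real \<times> real"
      have "((\<lambda>y. - exp (- (y * ?c p))) has_real_derivative ?c p * exp (- (y0 * ?c p))) (at y0)"
        by (auto intro!: derivative_eq_intros)
      then show "((\<lambda>y. (exp (- (y0 * ?c p)) - exp (- (y * ?c p))) / (y - y0)) \<longlongrightarrow> ?c p * exp (- (y0 * ?c p))) (at y0)"
        unfolding has_field_derivative_iff by simp
    qed
    show "\<forall>\<^sub>F y in at y0. AE p in lborel \<Otimes>\<^sub>M lborel. norm (?q y p) \<le> ?pd p * (2 / y0)"
      using ev
    proof eventually_elim
      case (elim y)
      show ?case
      proof (intro AE_I2)
        fix p
        have "\<bar>(exp (- (y0 * ?c p)) - exp (- (y * ?c p))) / (y - y0)\<bar> \<le> 2 / y0"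
          using elim y0 cf_nonneg by (intro exp_quot_bound) auto
        moreover have H: "\<And>A B C::real. 0 \<le> A \<Longrightarrow> \<bar>B\<bar> \<le> C \<Longrightarrow> norm (A * B) \<le> A * C"
          by (simp add: abs_mult mult_left_mono)
        ultimately show "norm (?q y p) \<le> ?pd p * (2 / y0)"
          using pd_nonneg by (intro H) auto
      qed
    qed
  qed (use pd_integrable in auto)
  have ev2: "\<forall>\<^sub>F y in at y0. (\<integral>p. ?q y p \<partial>(lborel \<Otimes>\<^sub>M lborel)) = (Kf y - Kf y0) / (y - y0)"
    using ev
  proof eventually_elim
    case (elim y)
    then have "0 < y" using y0 by linarith
    then show ?case using eq[of y] by (simp only: eq_commute)
  qed
  show ?thesis
    unfolding has_field_derivative_iff
    using Lim_transform_eventually[OF lim ev2] .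
qed

lemma Dk_nonneg: "0 \<le> Dk y"
  unfolding Dk_def by (intro Bochner_Integration.integral_nonneg mult_nonneg_nonneg pd_nonneg cf_nonneg) auto

lemma Dk_meas[measurable]: "Dk \<in> borel_measurable borel"
  unfolding Dk_def[abs_def] by measurable

lemma Kf_meas[measurable]: "Kf \<in> borel_measurable borel"
  unfolding Kf_def[abs_def] Phi_def by measurable


lemma Bsum_0: "1 \<le> j \<Longrightarrow> Bsum K j 0 = 0"
  unfolding Bsum_def by (intro sum.neutral) auto

lemma main:
  fixes P :: "'w measure" and K j :: nat and lam :: real
    and r \<theta> :: "nat \<Rightarrow> 'w \<Rightarrow> real" and a :: "nat \<Rightarrow> 'w \<Rightarrow> complex"
  assumes PS: "prob_space P" and lam: "lam > 0" and K1: "K \<ge> 1" and j: "1 \<le> j" "j \<le> K"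
    and users_indep:
      "prob_space.indep_vars P (\<lambda>_. lborel) (\<lambda>k \<omega>. ((r k \<omega>, \<theta> k \<omega>), a k \<omega>)) {..<K}"
    and users_law: "\<And>k. k < K \<Longrightarrow>
      distributed P (lborel :: ((real \<times> real) \<times> complex) measure)
        (\<lambda>\<omega>. ((r k \<omega>, \<theta> k \<omega>), a k \<omega>))
        (\<lambda>((x, t), z). ennreal (pos_density \<phi> R \<Delta> tb x t * cn_density z))"
  shows "distributed P lborel
           (\<lambda>\<omega>. order_stat K (\<lambda>k. gain M \<alpha> tb (r k \<omega>) (\<theta> k \<omega>) (a k \<omega>)) j)
           (\<lambda>z. ennreal (if z > 0 then
               fact K / (fact (j - 1) * fact (K - j))
               * deriv (Fpi M \<alpha> \<phi> lam R \<Delta> tb) z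
               * (Fpi M \<alpha> \<phi> lam R \<Delta> tb z) ^ (j - 1)
               * (1 - Fpi M \<alpha> \<phi> lam R \<Delta> tb z) ^ (K - j)
             else 0))"
proof -
  interpret prob_space P by (rule PS)
  define Y where "Y k \<omega> = ((r k \<omega>, \<theta> k \<omega>), a k \<omega>)" for k \<omega>
  define gf :: "(real \<times> real) \<times> complex \<Rightarrow> real" where "gf v = gain M \<alpha> tb (fst (fst v)) (snd (fst v)) (snd v)" for v
  define X where "X k \<omega> = gain M \<alpha> tb (r k \<omega>) (\<theta> k \<omega>) (a k \<omega>)" for k \<omega>
  define G where "G y = (if y < 0 then 0 else Kf y)" for y
  define cK where "cK = (fact K / (fact (j - 1) * fact (K - j)) :: real)"
  have lb: "(lborel :: ((real \<times> real) \<times> complex) measure) = (lborel \<Otimes>\<^sub>M lborel) \<Otimes>\<^sub>M lborel"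
    by (simp add: lborel_prod)
  have gf_meas: "gf \<in> borel_measurable (lborel :: ((real \<times> real) \<times> complex) measure)"
    unfolding lb gf_def by (rule gain_meas)
  have XY: "X k \<omega> = gf (Y k \<omega>)" for k \<omega> by (simp add: X_def gf_def Y_def)
  have Ymeas: "Y k \<in> measurable P lborel" if "k < K" for k
    using distributed_measurable[OF users_law[OF that]] by (simp add: Y_def[abs_def])
  have Xmeas: "X k \<in> borel_measurable P" if "k < K" for k
  proof -
    have "(\<lambda>\<omega>. gf (Y k \<omega>)) \<in> borel_measurable P"
      by (rule measurable_compose[OF Ymeas[OF that] gf_meas])
    then show ?thesis by (simp add: XY[abs_def])
  qed
  have indep: "indep_vars (\<lambda>_. borel) X {..<K}"
  proof -
    have "indep_vars (\<lambda>_. borel) (\<lambda>k \<omega>. gf (Y k \<omega>)) {..<K}"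
      using users_indep unfolding Y_def[abs_def]
      by (rule indep_vars_compose2) (use gf_meas in simp)
    then show ?thesis by (simp add: XY[abs_def])
  qed
  have Kf_nonneg: "0 \<le> Kf y" if "0 \<le> y" for y
    unfolding Kf_def using that pd_nonneg Phi_bounds
    by (intro Bochner_Integration.integral_nonneg mult_nonneg_nonneg) auto
  have cdfX: "prob {\<omega>\<in>space P. X k \<omega> \<le> y} = G y" if k: "k < K" for k y
  proof (cases "y < 0")
    case True
    have "y < X k \<omega>" for \<omega>
      using gain_nonneg[of "r k \<omega>" "\<theta> k \<omega>" "a k \<omega>"] True by (simp add: X_def)
    then have "{\<omega>\<in>space P. X k \<omega> \<le> y} = {}"
      by (auto simp: not_le[symmetric])
    then have "prob {\<omega>\<in>space P. X k \<omega> \<le> y} = prob {}" by (rule arg_cong)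
    then show ?thesis using True by (simp add: G_def)
  next
    case False
    have "emeasure P {\<omega>\<in>space P. X k \<omega> \<le> y} = ennreal (Kf y)"
      using gain_cdf[OF users_law[OF k], of y] False by (simp add: X_def)
    then have "ennreal (prob {\<omega>\<in>space P. X k \<omega> \<le> y}) = ennreal (Kf y)"
      by (simp add: emeasure_eq_measure)
    then show ?thesis using False Kf_nonneg[of y] by (simp add: G_def)
  qed
  have G01: "0 \<le> G y" "G y \<le> 1" for y
  proof -
    have "G y = prob {\<omega>\<in>space P. X 0 \<omega> \<le> y}" using cdfX[of 0 y] K1 by simp
    then show "0 \<le> G y" "G y \<le> 1" by simp_all
  qed
  have os_ev: "{\<omega>\<in>space P. order_stat K (\<lambda>k. X k \<omega>) j \<le> y} \<in> events"
    and os_prob: "prob {\<omega>\<in>space P. order_stat K (\<lambda>k. X k \<omega>) j \<le> y} = Bsum K j (G y)" for y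
    using order_stat_prob[OF indep Xmeas cdfX j] by auto
  define f :: "real \<Rightarrow> real" where
    "f z = (if z > 0 then cK * deriv (Fpi M \<alpha> \<phi> lam R \<Delta> tb) z
               * (Fpi M \<alpha> \<phi> lam R \<Delta> tb z) ^ (j - 1) * (1 - Fpi M \<alpha> \<phi> lam R \<Delta> tb z) ^ (K - j) else 0)" for z
  have Fpi_pos: "Fpi M \<alpha> \<phi> lam R \<Delta> tb z = Kf z" if "0 \<le> z" for z
    using Fpi_eq_Kf[OF lam that] .
  have dFpi: "(Fpi M \<alpha> \<phi> lam R \<Delta> tb has_real_derivative Dk z) (at z)" if "0 < z" for z
    by (rule has_field_derivative_transform_within_open[OF Kf_deriv[OF that], of "{0<..}"])
       (use that in \<open>auto simp: Fpi_pos\<close>)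
  have f_eq: "f z = (if z > 0 then cK * Dk z * (Kf z) ^ (j - 1) * (1 - Kf z) ^ (K - j) else 0)" for z
    using DERIV_imp_deriv[OF dFpi] Fpi_pos by (simp add: f_def)
  have f_meas: "f \<in> borel_measurable borel"
    unfolding f_eq[abs_def] by measurable
  have f_nonneg: "0 \<le> f z" for z
  proof (cases "z > 0")
    case True
    then have "0 \<le> Kf z" "Kf z \<le> 1" using G01[of z] by (auto simp: G_def)
    then show ?thesis using True Dk_nonneg unfolding f_eq by (simp add: cK_def)
  qed (simp add: f_eq)
  have X_os: "(\<lambda>\<omega>. order_stat K (\<lambda>k. gain M \<alpha> tb (r k \<omega>) (\<theta> k \<omega>) (a k \<omega>)) j) = (\<lambda>\<omega>. order_stat K (\<lambda>k. X k \<omega>) j)"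
    by (simp add: X_def)
  have osm: "(\<lambda>\<omega>. order_stat K (\<lambda>k. X k \<omega>) j) \<in> borel_measurable P"
    unfolding borel_measurable_iff_le using os_ev by blast
  have AEf: "AE x in lborel. 0 \<le> f x" using f_nonneg by simp
  have Meq: "emeasure P {\<omega>\<in>space P. order_stat K (\<lambda>k. X k \<omega>) j \<le> y} = ennreal (Bsum K j (G y))" for y
    using os_prob[of y] by (simp add: emeasure_eq_measure)
  have geq: "(\<integral>\<^sup>+x. ennreal (f x) * indicator {..y} x \<partial>lborel) = ennreal (Bsum K j (G y))" for y
    proof (cases "y \<le> 0")
      case True
      have "(\<lambda>x. ennreal (f x) * indicator {..y} x) = (\<lambda>x. 0)"
        using True by (intro ext) (auto simp: f_eq split: split_indicator)
      then have "(\<integral>\<^sup>+x. ennreal (f x) * indicator {..y} x \<partial>lborel) = 0" by simp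
      moreover have "G y = 0" using True Kf_0 by (auto simp: G_def)
      ultimately show ?thesis using Bsum_0[OF j(1)] by simp
    next
      case False
      then have y0: "0 < y" by simp
      define H where "H x = Bsum K j (Kf x)" for x
      have "(\<integral>\<^sup>+x. ennreal (f x) * indicator {..y} x \<partial>lborel) = (\<integral>\<^sup>+x. ennreal (f x) * indicator {0..y} x \<partial>lborel)"
        by (intro nn_integral_cong) (auto simp: f_eq split: split_indicator)
      also have "\<dots> = ennreal (H y - H 0)"
      proof (rule nn_integral_has_integral_lebesgue')
        show "\<And>x. x \<in> {0..y} \<Longrightarrow> 0 \<le> f x" using f_nonneg by simp
        show "(f has_integral H y - H 0) {0..y}"
        proof (rule fundamental_theorem_of_calculus_interior)
          show "0 \<le> y" using y0 by simp
          have cB: "continuous_on UNIV (Bsum K j)"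
            by (intro continuous_at_imp_continuous_on ballI DERIV_isCont[OF Bsum_deriv[OF j]])
          have cK': "continuous_on {0..y} Kf"
            using Kf_continuous_on by (rule continuous_on_subset) auto
          show "continuous_on {0..y} H"
            unfolding H_def[abs_def] using continuous_on_compose2[OF cB cK'] by simp
          fix x assume x: "x \<in> {0<..<y}"
          have "(H has_real_derivative
                  fact K / (fact (j - 1) * fact (K - j)) * Kf x ^ (j - 1) * (1 - Kf x) ^ (K - j) * Dk x) (at x)"
            unfolding H_def[abs_def]
            by (rule DERIV_chain2[OF Bsum_deriv[OF j] Kf_deriv]) (use x in simp)
          moreover have "f x = fact K / (fact (j - 1) * fact (K - j)) * Kf x ^ (j - 1) * (1 - Kf x) ^ (K - j) * Dk x"
            using x by (simp add: f_eq cK_def mult_ac)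
          ultimately show "(H has_vector_derivative f x) (at x)"
            by (simp add: has_real_derivative_iff_has_vector_derivative[symmetric])
        qed
      qed
      also have "H y - H 0 = Bsum K j (G y)"
        using y0 Kf_0 Bsum_0[OF j(1)] by (simp add: H_def G_def)
      finally show ?thesis .
    qed
  have geq': "(\<integral>\<^sup>+x. ennreal (f x * indicator {..y} x) \<partial>lborel) = ennreal (Bsum K j (G y))" for y
  proof -
    have "(\<integral>\<^sup>+x. ennreal (f x * indicator {..y} x) \<partial>lborel) = (\<integral>\<^sup>+x. ennreal (f x) * indicator {..y} x \<partial>lborel)"
      by (intro nn_integral_cong) (simp split: split_indicator)
    then show ?thesis using geq[of y] by simp
  qed
  have dist: "distributed P lborel (\<lambda>\<omega>. order_stat K (\<lambda>k. X k \<omega>) j) f"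
    by (rule distributedI_borel_atMost[OF osm f_meas AEf geq' Meq])
  show ?thesis
    using dist unfolding X_os[symmetric] f_def cK_def .
qed

end

theorem lemma1:
  fixes P :: "'w measure"
    and M K j :: nat
    and \<alpha> \<phi> lam R \<Delta> \<theta>bar :: real
    and r \<theta> :: "nat \<Rightarrow> 'w \<Rightarrow> real"
    and a :: "nat \<Rightarrow> 'w \<Rightarrow> complex"
  assumes "prob_space P"
    and "M \<ge> 1" and "\<alpha> > 0" and "\<phi> > 0" and "lam > 0" and "R > 0" and "\<Delta> > 0"
    and "K \<ge> 1" and "1 \<le> j" and "j \<le> K"
    and users_indep:
      "prob_space.indep_vars P (\<lambda>_. lborel) (\<lambda>k \<omega>. ((r k \<omega>, \<theta> k \<omega>), a k \<omega>)) {..<K}"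
    and users_law: "\<And>k. k < K \<Longrightarrow>
      distributed P (lborel :: ((real \<times> real) \<times> complex) measure)
        (\<lambda>\<omega>. ((r k \<omega>, \<theta> k \<omega>), a k \<omega>))
        (\<lambda>((x, t), z). ennreal (pos_density \<phi> R \<Delta> \<theta>bar x t * cn_density z))"
  shows "distributed P lborel
           (\<lambda>\<omega>. order_stat K (\<lambda>k. gain M \<alpha> \<theta>bar (r k \<omega>) (\<theta> k \<omega>) (a k \<omega>)) j)
           (\<lambda>z. ennreal (if z > 0 then
               fact K / (fact (j - 1) * fact (K - j))
               * deriv (Fpi M \<alpha> \<phi> lam R \<Delta> \<theta>bar) z
               * (Fpi M \<alpha> \<phi> lam R \<Delta> \<theta>bar z) ^ (j - 1)
               * (1 - Fpi M \<alpha> \<phi> lam R \<Delta> \<theta>bar z) ^ (K - j)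
             else 0))"
    by (rule main[OF assms(2) assms(3) assms(4) assms(6) assms(7) assms(1) assms(5) assms(8) assms(9) assms(10) users_indep users_law])

end
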